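(* Let $G=(V,E)$ be an atomic bispanning graph, $v\in V$ of degree $3$ with neighbours $x,y,z$ and incident edges $e_x,e_y,e_z$, let $(a,b)\in\{(x,y),(x,z),(y,z)\}$, $c$ the remaining neighbour, and $G_{a,b}$ the reduction graph. Let $(e,f,S,T)$ be an arc of $\vec\tau_3(G_{a,b})$ with $e\neq e_{a,b}$ and $f\neq e_{a,b}$. If (1) $e_{a,b}\in S$ and $e\notin D_{G_{a,b}}(S,e_{a,b})\cap C_G(T+e_c,e_a)\cap C_G(T+e_c,e_b)$, or (2) $e_{a,b}\in T$ and $e\notin D_{G_{a,b}}(T,e_{a,b})\cap C_G(S+e_c,e_a)\cap C_G(S+e_c,e_b)$, then $(e,f,\rho_{e_{a,b},c}(S,T))$ is an arc of $\vec\tau_3(G)$. Conversely, for all $(S,T)\in V_{\tau(G_{a,b})}$ and all edges $e,f\neq e_{a,b}$: if $(e,f,S,T)$ is not an arc of $\vec\tau_3(G_{a,b})$, or if it is an arc but neither condition (1) nor condition (2) holds, then $(e,f,\rho_{e_{a,b},c}(S,T))$ is not an arc of $\vec\tau_3(G)$.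
   Context: Graphs are finite, undirected, possibly with parallel edges, no loops; $X+a=X\cup\{a\}$, $X-a=X\setminus\{a\}$. A spanning tree is $T\subseteq E$ with $(V,T)$ connected and acyclic; bispanning means $E$ is the union of two disjoint spanning trees; atomic means the only bispanning subgraphs are the graph itself and single vertices. For a spanning tree $T$ of a graph $H$ and $e\notin T$, $C_H(T,e)$ is the edge set of the unique cycle in $T+e$; for $e\in T$, $D_H(T,e)$ is the set of edges of $H$ with one end in each component of $(V(H),T-e)$. For disjoint spanning trees $S,T$ covering all edges of $H$: $(e,f)$ with $e\in S,f\in T$ and $D_H(S,e)\cap C_H(T,e)=\{e,f\}$ is a unique $S$ edge exchange; $(e,f)$ with $e\in T,f\in S$ and $D_H(T,e)\cap C_H(S,e)=\{e,f\}$ is a unique $T$ edge exchange. $\vec\tau_3(H)$: vertex set $V_{\tau(H)}$ of ordered pairs $(S,T)$ of disjoint spanning trees covering all edges; an arc $(e,f,S,T)$ from $(S,T)$ to $(S-e+f,T+e-f)$ for each unique $S$ edge exchange and to $(S+e-f,T-e+f)$ for each unique $T$ edge exchange; $(e,f,P)$ with $P=(S,T)$ denotes $(e,f,S,T)$. The edge $e_w$ joins $v$ and $w$. The reduction graph $G_{a,b}$ has vertex set $V-v$ and edge set $E-e_x-e_y-e_z+e_{a,b}$ with $e_{a,b}$ a new edge with ends $a,b$. $\rho_{e_{a,b},c}(S,T)=(S-e_{a,b}+e_a+e_b,T+e_c)$ if $e_{a,b}\in S$ and $=(S+e_c,T-e_{a,b}+e_a+e_b)$ if $e_{a,b}\in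 T$. *)

theory Defs
  imports Main
begin

text \<open>A finite multigraph is given by a vertex set V, an edge set E and a function
  ends assigning to every edge its set of two distinct end vertices (parallel edges
  allowed, no loops).\<close>

definition graph :: "'v set \<Rightarrow> 'e set \<Rightarrow> ('e \<Rightarrow> 'v set) \<Rightarrow> bool" where
  "graph V E ends \<longleftrightarrow> finite V \<and> V \<noteq> {} \<and> finite E \<and>
     (\<forall>g\<in>E. ends g \<subseteq> V \<and> card (ends g) = 2)"

definition adj :: "('e \<Rightarrow> 'v set) \<Rightarrow> 'e set \<Rightarrow> ('v \<times> 'v) set" where
  "adj ends F = {(p, q). \<exists>g\<in>F. ends g = {p, q}}"

definition conn :: "('e \<Rightarrow> 'v set) \<Rightarrow> 'e set \<Rightarrow> 'v \<Rightarrow> 'v \<Rightarrow> bool" where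
  "conn ends F p q \<longleftrightarrow> (p, q) \<in> (adj ends F)\<^sup>*"

definition is_cycle :: "('e \<Rightarrow> 'v set) \<Rightarrow> 'e set \<Rightarrow> bool" where
  "is_cycle ends C \<longleftrightarrow> C \<noteq> {} \<and> finite C \<and>
     (\<forall>u\<in>\<Union>(ends ` C). card {g\<in>C. u \<in> ends g} = 2) \<and>
     (\<forall>p\<in>\<Union>(ends ` C). \<forall>q\<in>\<Union>(ends ` C). conn ends C p q)"

definition spanning_tree :: "'v set \<Rightarrow> 'e set \<Rightarrow> ('e \<Rightarrow> 'v set) \<Rightarrow> 'e set \<Rightarrow> bool" where
  "spanning_tree V E ends T \<longleftrightarrow> T \<subseteq> E \<and>
     (\<forall>p\<in>V. \<forall>q\<in>V. conn ends T p q) \<and>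
     \<not> (\<exists>C\<subseteq>T. is_cycle ends C)"

definition bispanning :: "'v set \<Rightarrow> 'e set \<Rightarrow> ('e \<Rightarrow> 'v set) \<Rightarrow> bool" where
  "bispanning V E ends \<longleftrightarrow> (\<exists>S T. spanning_tree V E ends S \<and> spanning_tree V E ends T \<and>
     S \<inter> T = {} \<and> S \<union> T = E)"

definition subgraph :: "'v set \<Rightarrow> 'e set \<Rightarrow> 'v set \<Rightarrow> 'e set \<Rightarrow> ('e \<Rightarrow> 'v set) \<Rightarrow> bool" where
  "subgraph V' E' V E ends \<longleftrightarrow> V' \<subseteq> V \<and> E' \<subseteq> E \<and> (\<forall>g\<in>E'. ends g \<subseteq> V')"

definition atomic :: "'v set \<Rightarrow> 'e set \<Rightarrow> ('e \<Rightarrow> 'v set) \<Rightarrow> bool" where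
  "atomic V E ends \<longleftrightarrow> (\<forall>V' E'. V' \<noteq> {} \<and> subgraph V' E' V E ends \<and> bispanning V' E' ends \<longrightarrow>
      (V' = V \<and> E' = E) \<or> (\<exists>x. V' = {x}))"

text \<open>C_H(T,e): edge set of the unique cycle in T + e\<close>
definition fcycle :: "('e \<Rightarrow> 'v set) \<Rightarrow> 'e set \<Rightarrow> 'e \<Rightarrow> 'e set" where
  "fcycle ends T e = (THE C. C \<subseteq> insert e T \<and> is_cycle ends C)"

text \<open>D_H(T,e): edges of H with one end in each component of (V(H), T - e), i.e. one end
  in the component of one end of e and the other end in the component of the other end of e.\<close>
definition fcut :: "'e set \<Rightarrow> ('e \<Rightarrow> 'v set) \<Rightarrow> 'e set \<Rightarrow> 'e \<Rightarrow> 'e set" where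
  "fcut E ends T e = {g\<in>E. \<exists>p q u w. ends g = {p, q} \<and> ends e = {u, w} \<and>
       conn ends (T - {e}) u p \<and> conn ends (T - {e}) w q}"

definition tau_vertices :: "'v set \<Rightarrow> 'e set \<Rightarrow> ('e \<Rightarrow> 'v set) \<Rightarrow> ('e set \<times> 'e set) set" where
  "tau_vertices V E ends = {(S, T). spanning_tree V E ends S \<and> spanning_tree V E ends T \<and>
       S \<inter> T = {} \<and> S \<union> T = E}"

definition tau3_arc :: "'v set \<Rightarrow> 'e set \<Rightarrow> ('e \<Rightarrow> 'v set) \<Rightarrow> 'e \<Rightarrow> 'e \<Rightarrow> 'e set \<Rightarrow> 'e set \<Rightarrow> bool" where
  "tau3_arc V E ends e f S T \<longleftrightarrow> (S, T) \<in> tau_vertices V E ends \<and>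
     ((e \<in> S \<and> f \<in> T \<and> fcut E ends S e \<inter> fcycle ends T e = {e, f}) \<or>
      (e \<in> T \<and> f \<in> S \<and> fcut E ends T e \<inter> fcycle ends S e = {e, f}))"

definition rho :: "'e \<Rightarrow> 'e \<Rightarrow> 'e \<Rightarrow> 'e \<Rightarrow> 'e set \<times> 'e set \<Rightarrow> 'e set \<times> 'e set" where
  "rho eab ea eb ec P = (if eab \<in> fst P
      then (fst P - {eab} \<union> {ea, eb}, insert ec (snd P))
      else (insert ec (fst P), snd P - {eab} \<union> {ea, eb}))"

end

theory Submission
  imports Defs
begin


lemma conn_refl[simp]: "conn ends F p p" by (simp add: conn_def)

lemma conn_edge: "g \<in> F \<Longrightarrow> ends g = {p,q} \<Longrightarrow> conn ends F p q"
  unfolding conn_def adj_def by (rule r_into_rtrancl) blast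

lemma conn_sym: "conn ends F p q \<Longrightarrow> conn ends F q p"
  unfolding conn_def
proof (induction rule: rtrancl_induct)
  case base then show ?case by simp
next
  case (step q r)
  then have "(r,q) \<in> adj ends F" by (auto simp: adj_def insert_commute)
  then show ?case using step.IH by (rule converse_rtrancl_into_rtrancl)
qed

lemma conn_trans: "conn ends F p q \<Longrightarrow> conn ends F q r \<Longrightarrow> conn ends F p r"
  unfolding conn_def by (rule rtrancl_trans)

lemma adj_mono: "F \<subseteq> F' \<Longrightarrow> adj ends F \<subseteq> adj ends F'"
  unfolding adj_def by blast

lemma conn_mono: "F \<subseteq> F' \<Longrightarrow> conn ends F p q \<Longrightarrow> conn ends F' p q"
  unfolding conn_def using rtrancl_mono[OF adj_mono] by blast

lemma conn_map:
  assumes h: "\<And>g r s. g \<in> F \<Longrightarrow> ends g = {r,s} \<Longrightarrow> conn ends2 F2 (m r) (m s)"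
  and c: "conn ends F p q"
  shows "conn ends2 F2 (m p) (m q)"
  using c unfolding conn_def
proof (induction rule: rtrancl_induct)
  case base then show ?case by simp
next
  case (step q r)
  then obtain g where "g \<in> F" "ends g = {q,r}" by (auto simp: adj_def)
  then have "conn ends2 F2 (m q) (m r)" by (rule h)
  then show ?case using step.IH unfolding conn_def by (rule rtrancl_trans[rotated])
qed

lemma adj_upd: assumes "eab \<notin> F" shows "adj (ends(eab := X)) F = adj ends F"
proof -
  have *: "g \<in> F \<Longrightarrow> (ends(eab := X)) g = ends g" for g using assms by auto
  show ?thesis unfolding adj_def by (simp del: fun_upd_apply add: * cong: bex_cong)
qed

lemma conn_upd: "eab \<notin> F \<Longrightarrow> conn (ends(eab := X)) F = conn ends F"
  unfolding conn_def[abs_def] by (simp add: adj_upd)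

fun walk :: "('e \<Rightarrow> 'v set) \<Rightarrow> 'e set \<Rightarrow> 'v list \<Rightarrow> 'e list \<Rightarrow> bool" where
  "walk ends F [p] [] = True"
| "walk ends F (p#q#ps) (g#gs) = (g \<in> F \<and> ends g = {p,q} \<and> walk ends F (q#ps) gs)"
| "walk ends F _ _ = False"

lemma walk_len: "walk ends F ps gs \<Longrightarrow> length ps = Suc (length gs)"
  by (induction ends F ps gs rule: walk.induct) auto

lemma walk_drop: "walk ends F ps gs \<Longrightarrow> i < length ps \<Longrightarrow> walk ends F (drop i ps) (drop i gs)"
proof (induction ends F ps gs arbitrary: i rule: walk.induct)
  case (2 ends F p q ps g gs)
  then show ?case by (cases i) auto
qed auto

lemma walk_sub: "walk ends F ps gs \<Longrightarrow> set gs \<subseteq> F"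
  by (induction ends F ps gs rule: walk.induct) auto

lemma walk_ends: "walk ends F ps gs \<Longrightarrow> \<Union>(ends ` set gs) \<subseteq> set ps"
  by (induction ends F ps gs rule: walk.induct) auto

lemma walk_conn: "walk ends F ps gs \<Longrightarrow> z \<in> set ps \<Longrightarrow> conn ends (set gs) (hd ps) z"
proof (induction ends F ps gs arbitrary: z rule: walk.induct)
  case (2 ends F p q ps g gs)
  have e: "conn ends (set (g#gs)) p q" by (rule conn_edge[of g]) (use 2 in auto)
  show ?case
  proof (cases "z = p")
    case False
    then have "z \<in> set (q#ps)" using 2 by auto
    then have "conn ends (set gs) q z" using 2 by auto
    then have "conn ends (set (g#gs)) q z" by (rule conn_mono[rotated]) auto
    then show ?thesis using e by (auto intro: conn_trans)
  qed simp
qed auto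

lemma walk_exists:
  assumes "conn ends F u w"
  shows "\<exists>ps gs. walk ends F ps gs \<and> hd ps = u \<and> last ps = w \<and> distinct ps"
  using assms unfolding conn_def
proof (induction rule: converse_rtrancl_induct)
  case base
  show ?case by (rule exI[of _ "[w]"], rule exI[of _ "[]"]) simp
next
  case (step u u')
  then obtain ps gs where w: "walk ends F ps gs" "hd ps = u'" "last ps = w" "distinct ps" by blast
  obtain g where g: "g \<in> F" "ends g = {u,u'}" using step(1) by (auto simp: adj_def)
  have ne: "ps \<noteq> []" using walk_len[OF w(1)] by auto
  show ?case
  proof (cases "u \<in> set ps")
    case True
    then obtain i where i: "i < length ps" "ps ! i = u" by (auto simp: in_set_conv_nth)
    show ?thesis
      apply (rule exI[of _ "drop i ps"], rule exI[of _ "drop i gs"])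
      using walk_drop[OF w(1) i(1)] i w(3,4) by (auto simp: hd_drop_conv_nth last_drop)
  next
    case False
    then obtain rest where ps: "ps = u' # rest" using ne w(2) by (cases ps) auto
    show ?thesis
      apply (rule exI[of _ "u # ps"], rule exI[of _ "g # gs"])
      using w g False ps by auto
  qed
qed

definition deg :: "('e \<Rightarrow> 'v set) \<Rightarrow> 'e set \<Rightarrow> 'v \<Rightarrow> nat" where
  "deg ends C z = card {h\<in>C. z \<in> ends h}"

lemma walk_deg:
  "walk ends F ps gs \<Longrightarrow> distinct ps \<Longrightarrow> 2 \<le> length ps \<Longrightarrow>
   deg ends (set gs) z = (if z = hd ps \<or> z = last ps then 1 else if z \<in> set ps then 2 else 0)"
proof (induction ends F ps gs rule: walk.induct)
  case (2 ends F p q ps g gs)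
  have w: "walk ends F (q#ps) gs" and g: "ends g = {p,q}" using 2 by auto
  show ?case
  proof (cases ps)
    case Nil
    then have "gs = []" using walk_len[OF w] by simp
    then show ?thesis using g Nil 2(3) unfolding deg_def by (auto simp: Collect_conv_if)
  next
    case (Cons r rs)
    have IH: "deg ends (set gs) z = (if z = q \<or> z = last (q#ps) then 1 else if z \<in> set (q#ps) then 2 else 0)"
      using 2 Cons by auto
    have pn: "p \<notin> set (q#ps)" using 2(3) by auto
    have gn: "g \<notin> set gs" using walk_ends[OF w] g pn by auto
    have lq: "last (q#ps) \<noteq> q" using 2(3) Cons by (auto simp: last_in_set)
    have "{h \<in> set (g#gs). z \<in> ends h} = (if z \<in> ends g then insert g {h\<in>set gs. z \<in> ends h} else {h\<in>set gs. z \<in> ends h})"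
      by auto
    then have "deg ends (set (g#gs)) z = (if z \<in> ends g then 1 else 0) + deg ends (set gs) z"
      unfolding deg_def using gn by simp
    then show ?thesis using IH g pn lq Cons by auto
  qed
qed auto

lemma cycle_from_conn:
  assumes g: "g \<notin> F" "ends g = {u,w}" "u \<noteq> w" and c: "conn ends F u w"
  shows "\<exists>C\<subseteq>insert g F. is_cycle ends C \<and> g \<in> C"
proof -
  obtain ps gs where w: "walk ends F ps gs" "hd ps = u" "last ps = w" "distinct ps"
    using walk_exists[OF c] by blast
  have ne: "ps \<noteq> []" using walk_len[OF w(1)] by auto
  have l2: "2 \<le> length ps"
  proof (rule ccontr)
    assume "\<not> 2 \<le> length ps"
    then have "hd ps = last ps" using ne by (cases ps) (auto simp: Suc_le_eq)
    then show False using w g by auto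
  qed
  let ?C = "insert g (set gs)"
  have gn: "g \<notin> set gs" using walk_sub[OF w(1)] g by auto
  have W: "\<Union>(ends ` ?C) \<subseteq> set ps" using walk_ends[OF w(1)] g w ne
    by (auto simp: hd_in_set last_in_set)
  have "is_cycle ends ?C"
    unfolding is_cycle_def
  proof (intro conjI ballI)
    fix z assume z: "z \<in> \<Union>(ends ` ?C)"
    then have zp: "z \<in> set ps" using W by auto
    have "{h \<in> ?C. z \<in> ends h} = (if z \<in> ends g then insert g {h\<in>set gs. z \<in> ends h} else {h\<in>set gs. z \<in> ends h})"
      by auto
    then have "card {h \<in> ?C. z \<in> ends h} = (if z \<in> ends g then 1 else 0) + deg ends (set gs) z"
      unfolding deg_def using gn by simp
    then show "card {h \<in> ?C. z \<in> ends h} = 2"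
      using walk_deg[OF w(1) w(4) l2, of z] zp g w by auto
  next
    fix p q assume "p \<in> \<Union>(ends ` ?C)" "q \<in> \<Union>(ends ` ?C)"
    then have "p \<in> set ps" "q \<in> set ps" using W by auto
    then have "conn ends (set gs) u p" "conn ends (set gs) u q" using walk_conn[OF w(1)] w(2) by auto
    then have "conn ends (set gs) p q" by (meson conn_sym conn_trans)
    then show "conn ends ?C p q" by (rule conn_mono[rotated]) auto
  qed auto
  then show ?thesis using walk_sub[OF w(1)] by blast
qed

lemma card_filter_sum: "finite C \<Longrightarrow> card {h\<in>C. P h} = (\<Sum>h\<in>C. if P h then 1 else 0)"
  using sum.inter_filter[of C "\<lambda>_. 1::nat" P] by simp

lemma dcount: "finite A \<Longrightarrow> finite C \<Longrightarrow>
  (\<Sum>z\<in>A. card {h\<in>C. z \<in> ends h}) = (\<Sum>h\<in>C. card {z\<in>A. z \<in> ends h})"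
  by (simp add: card_filter_sum) (rule sum.swap)

lemma cycle_conn:
  assumes cy: "is_cycle ends C" and c2: "\<forall>h\<in>C. card (ends h) = 2" and g: "g \<in> C" "ends g = {p,q}"
  shows "conn ends (C - {g}) p q"
proof (rule ccontr)
  assume nc: "\<not> ?thesis"
  define K where "K = {z. conn ends (C - {g}) p z}"
  define W where "W = \<Union>(ends ` C)"
  have fC: "finite C" using cy by (simp add: is_cycle_def)
  have "\<forall>h\<in>C. finite (ends h)" using c2 by (auto intro: card_ge_0_finite)
  then have fW: "finite W" unfolding W_def using fC by simp
  let ?A = "W \<inter> K"
  have "(\<Sum>z\<in>?A. card{h\<in>C. z\<in>ends h}) = (\<Sum>z\<in>?A. 2)"
    using cy by (intro sum.cong) (auto simp: is_cycle_def W_def)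
  then have L: "(\<Sum>z\<in>?A. card{h\<in>C. z\<in>ends h}) = 2 * card ?A" by simp
  have R: "(\<Sum>z\<in>?A. card{h\<in>C. z\<in>ends h}) = (\<Sum>h\<in>C. card {z\<in>?A. z\<in>ends h})"
    by (rule dcount) (use fW fC in auto)
  have e: "even (card {z\<in>?A. z\<in>ends h})" if "h \<in> C - {g}" for h
  proof -
    have "card (ends h) = 2" using c2 that by auto
    then obtain r s where rs: "ends h = {r,s}" "r\<noteq>s" by (auto simp: card_2_iff)
    have "conn ends (C - {g}) r s" using that rs by (intro conn_edge) auto
    then have "r \<in> K \<longleftrightarrow> s \<in> K" unfolding K_def mem_Collect_eq by (meson conn_sym conn_trans)
    moreover have "r \<in> W" "s \<in> W" using that rs W_def by auto
    ultimately have "{z\<in>?A. z\<in>ends h} = (if r \<in> K then {r,s} else {})" using rs by auto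
    then show ?thesis using rs by auto
  qed
  have qK: "q \<notin> K" using nc K_def by auto
  have pK: "p \<in> K" by (simp add: K_def)
  have gA: "{z\<in>?A. z\<in>ends g} = {p}" using g pK qK W_def by auto
  have "(\<Sum>h\<in>C. card {z\<in>?A. z\<in>ends h}) = card {z\<in>?A. z\<in>ends g} + (\<Sum>h\<in>C-{g}. card {z\<in>?A. z\<in>ends h})"
    using fC g by (simp add: sum.remove)
  moreover have "even (\<Sum>h\<in>C-{g}. card {z\<in>?A. z\<in>ends h})" using e by (intro dvd_sum) auto
  ultimately have "odd (\<Sum>h\<in>C. card {z\<in>?A. z\<in>ends h})" using gA by simp
  then show False using L R by simp
qed

definition sep :: "('e \<Rightarrow> 'v set) \<Rightarrow> 'e set \<Rightarrow> 'e \<Rightarrow> 'e \<Rightarrow> bool" where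
  "sep ends F g h \<longleftrightarrow> (\<exists>p q. ends h = {p,q} \<and> \<not> conn ends (F - {g}) p q)"

lemma sep_iff: assumes "ends h = {p,q}" shows "sep ends F g h \<longleftrightarrow> \<not> conn ends (F - {g}) p q"
proof
  assume "sep ends F g h"
  then obtain p' q' where pq: "ends h = {p',q'}" "\<not> conn ends (F - {g}) p' q'" by (auto simp: sep_def)
  then have "(p'=p \<and> q'=q) \<or> (p'=q \<and> q'=p)" using assms by (auto simp: doubleton_eq_iff)
  then show "\<not> conn ends (F - {g}) p q" using pq conn_sym by metis
next
  assume "\<not> conn ends (F - {g}) p q"
  then show "sep ends F g h" using assms by (auto simp: sep_def)
qed

lemma acyclicI:
  assumes c2: "\<forall>h\<in>F. card (ends h) = 2"
  and ns: "\<And>g p q. g \<in> F \<Longrightarrow> ends g = {p,q} \<Longrightarrow> \<not> conn ends (F - {g}) p q"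
  shows "\<not> (\<exists>C\<subseteq>F. is_cycle ends C)"
proof
  assume "\<exists>C\<subseteq>F. is_cycle ends C"
  then obtain C where C: "C \<subseteq> F" "is_cycle ends C" by blast
  then obtain g where g: "g \<in> C" by (auto simp: is_cycle_def)
  then have "card (ends g) = 2" using c2 C by auto
  then obtain p q where pq: "ends g = {p,q}" by (auto simp: card_2_iff)
  have "conn ends (C - {g}) p q" by (rule cycle_conn[OF C(2) _ g pq]) (use c2 C in auto)
  then have "conn ends (F - {g}) p q" by (rule conn_mono[rotated]) (use C in auto)
  then show False using ns[of g p q] g C pq by auto
qed

lemma tree_sep:
  assumes ac: "\<not> (\<exists>C\<subseteq>T. is_cycle ends C)" and g: "g \<in> T" "ends g = {u,w}" "u \<noteq> w"
  shows "\<not> conn ends (T - {g}) u w"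
proof
  assume "conn ends (T - {g}) u w"
  from cycle_from_conn[of g "T - {g}", OF _ g(2,3) this] obtain C where
    "C \<subseteq> insert g (T - {g})" "is_cycle ends C" by auto
  then show False using ac g by auto
qed

lemma tree_side:
  assumes c: "conn ends T u p" and g: "g \<in> T" "ends g = {u,w}"
  shows "conn ends (T - {g}) u p \<or> conn ends (T - {g}) w p"
  using c unfolding conn_def
proof (induction rule: rtrancl_induct)
  case base then show ?case by simp
next
  case (step p p')
  then obtain h where h: "h \<in> T" "ends h = {p,p'}" by (auto simp: adj_def)
  show ?case
  proof (cases "h = g")
    case True
    then have "p' = u \<or> p' = w" using h g by (auto simp: doubleton_eq_iff)
    then show ?thesis by (auto simp: conn_def)
  next
    case False
    then have "(p,p') \<in> adj ends (T - {g})" using h by (auto simp: adj_def)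
    then show ?thesis using step.IH by (blast intro: rtrancl_into_rtrancl)
  qed
qed

lemma two_ends: "card (ends h) = 2 \<Longrightarrow> \<exists>p q. ends h = {p,q} \<and> p \<noteq> q"
  by (auto simp: card_2_iff)

lemma fcut_char:
  assumes sp: "spanning_tree V E ends T" and gr: "\<forall>h\<in>E. ends h \<subseteq> V \<and> card (ends h) = 2"
  and eT: "e \<in> T" and gE: "g \<in> E"
  shows "g \<in> fcut E ends T e \<longleftrightarrow> sep ends T e g"
proof -
  have TE: "T \<subseteq> E" and con: "\<forall>p\<in>V. \<forall>q\<in>V. conn ends T p q" and ac: "\<not>(\<exists>C\<subseteq>T. is_cycle ends C)"
    using sp by (auto simp: spanning_tree_def)
  have "card (ends e) = 2" using gr eT TE by auto
  then obtain u w where ee: "ends e = {u,w}" "u \<noteq> w" by (auto simp: card_2_iff)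
  have "card (ends g) = 2" using gr gE by auto
  then obtain p q where eg: "ends g = {p,q}" "p \<noteq> q" by (auto simp: card_2_iff)
  have uV: "u\<in>V" "w\<in>V" "p\<in>V" "q\<in>V" using gr eT TE gE ee eg by auto
  have ns: "\<not> conn ends (T-{e}) u w" using tree_sep[of T ends e u w] ac eT ee by blast
  have "g \<in> fcut E ends T e \<longleftrightarrow> (\<exists>p' q' u' w'. ends g = {p',q'} \<and> ends e = {u',w'} \<and>
       conn ends (T - {e}) u' p' \<and> conn ends (T - {e}) w' q')" using gE by (simp add: fcut_def)
  also have "\<dots> \<longleftrightarrow> \<not> conn ends (T - {e}) p q"
  proof
    assume "\<exists>p' q' u' w'. ends g = {p',q'} \<and> ends e = {u',w'} \<and>
       conn ends (T - {e}) u' p' \<and> conn ends (T - {e}) w' q'"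
    then obtain p' q' u' w' where A: "ends g = {p',q'}" "ends e = {u',w'}"
      "conn ends (T - {e}) u' p'" "conn ends (T - {e}) w' q'" by blast
    show "\<not> conn ends (T - {e}) p q"
    proof
      assume c: "conn ends (T - {e}) p q"
      have "(p'=p \<and> q'=q) \<or> (p'=q \<and> q'=p)" using A eg by (auto simp: doubleton_eq_iff)
      then have "conn ends (T - {e}) p' q'" using c conn_sym by metis
      then have "conn ends (T - {e}) u' w'" using A conn_sym conn_trans by metis
      moreover have "(u'=u \<and> w'=w) \<or> (u'=w \<and> w'=u)" using A ee by (auto simp: doubleton_eq_iff)
      ultimately show False using ns conn_sym by metis
    qed
  next
    assume nc: "\<not> conn ends (T - {e}) p q"
    have sp1: "conn ends (T-{e}) u p \<or> conn ends (T-{e}) w p"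
      using tree_side[of ends T u p e w] con uV eT ee by auto
    have sp2: "conn ends (T-{e}) u q \<or> conn ends (T-{e}) w q"
      using tree_side[of ends T u q e w] con uV eT ee by auto
    have "(conn ends (T-{e}) u p \<and> conn ends (T-{e}) w q) \<or> (conn ends (T-{e}) w p \<and> conn ends (T-{e}) u q)"
      using sp1 sp2 nc conn_sym conn_trans by metis
    then show "\<exists>p' q' u' w'. ends g = {p',q'} \<and> ends e = {u',w'} \<and>
       conn ends (T - {e}) u' p' \<and> conn ends (T - {e}) w' q'"
    proof
      assume "conn ends (T-{e}) u p \<and> conn ends (T-{e}) w q"
      then show ?thesis using eg ee by blast
    next
      assume "conn ends (T-{e}) w p \<and> conn ends (T-{e}) u q"
      moreover have "ends e = {w,u}" using ee by auto
      ultimately show ?thesis using eg by blast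
    qed
  qed
  also have "\<dots> \<longleftrightarrow> sep ends T e g" using sep_iff[of ends g p q T e] eg by simp
  finally show ?thesis .
qed

lemma fcycle_char:
  assumes sp: "spanning_tree V E ends T" and gr: "\<forall>h\<in>E. ends h \<subseteq> V \<and> card (ends h) = 2"
  and eE: "e \<in> E" "e \<notin> T"
  shows "fcycle ends T e = insert e {g\<in>T. sep ends T g e}"
proof -
  have TE: "T \<subseteq> E" and con: "\<forall>p\<in>V. \<forall>q\<in>V. conn ends T p q" and ac: "\<not>(\<exists>C\<subseteq>T. is_cycle ends C)"
    using sp by (auto simp: spanning_tree_def)
  have "card (ends e) = 2" using gr eE by auto
  then obtain u w where ee: "ends e = {u,w}" "u \<noteq> w" by (auto simp: card_2_iff)
  have uV: "u\<in>V" "w\<in>V" using gr eE ee by auto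
  let ?C0 = "insert e {g\<in>T. sep ends T g e}"
  have sepe: "sep ends T g e \<longleftrightarrow> \<not> conn ends (T-{g}) u w" for g using sep_iff[of ends e u w T g] ee by simp
  have uniq: "C = ?C0" if C: "C \<subseteq> insert e T" "is_cycle ends C" for C
  proof -
    have c2: "\<forall>h\<in>C. card (ends h) = 2" using C TE eE gr by auto
    have eC: "e \<in> C"
    proof (rule ccontr)
      assume "e \<notin> C"
      then have "C \<subseteq> T" using C by auto
      then show False using ac C by auto
    qed
    show ?thesis
    proof (rule set_eqI, rule iffI)
      fix h assume hC: "h \<in> C"
      show "h \<in> ?C0"
      proof (cases "h = e")
        case False
        then have hT: "h \<in> T" using hC C by auto
        have "card (ends h) = 2" using c2 hC by auto
  then obtain r s where rs: "ends h = {r,s}" "r \<noteq> s" by (auto simp: card_2_iff)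
        have "conn ends (C - {h}) r s" using cycle_conn[of ends C h r s] C(2) c2 hC rs by blast
        then have cc: "conn ends (insert e (T - {h})) r s" by (rule conn_mono[rotated]) (use C in auto)
        have "\<not> conn ends (T-{h}) u w"
        proof
          assume cuw: "conn ends (T-{h}) u w"
          have "conn ends (T - {h}) (id r) (id s)"
          proof (rule conn_map[OF _ cc])
            fix g r' s' assume g: "g \<in> insert e (T - {h})" "ends g = {r',s'}"
            show "conn ends (T - {h}) (id r') (id s')"
            proof (cases "g = e")
              case True
              then have "(r'=u \<and> s'=w) \<or> (r'=w \<and> s'=u)" using g ee by (auto simp: doubleton_eq_iff)
              then show ?thesis using cuw conn_sym by auto
            next
              case False
              then show ?thesis using g by (auto intro: conn_edge)
            qed
          qed
          then show False using tree_sep[of T ends h r s] ac hT rs by simp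
        qed
        then show ?thesis using hT sepe by auto
      qed simp
    next
      fix h assume h: "h \<in> ?C0"
      show "h \<in> C"
      proof (cases "h = e")
        case True then show ?thesis using eC by simp
      next
        case False
        then have hT: "h \<in> T" and nc: "\<not> conn ends (T-{h}) u w" using h sepe by auto
        show ?thesis
        proof (rule ccontr)
          assume "h \<notin> C"
          have "conn ends (C - {e}) u w" using cycle_conn[of ends C e u w] C(2) c2 eC ee by blast
          then have "conn ends (T - {h}) u w" by (rule conn_mono[rotated]) (use C \<open>h \<notin> C\<close> in auto)
          then show False using nc by simp
        qed
      qed
    qed
  qed
  obtain C where C: "C \<subseteq> insert e T" "is_cycle ends C"
    using cycle_from_conn[of e T ends u w] eE ee con uV by blast
  have "?C0 = C" using uniq C by simp
  show ?thesis unfolding fcycle_def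
  proof (rule the_equality)
    show "?C0 \<subseteq> insert e T \<and> is_cycle ends ?C0" using C \<open>?C0 = C\<close> by simp
  next
    fix C' assume "C' \<subseteq> insert e T \<and> is_cycle ends C'"
    then show "C' = ?C0" using uniq by blast
  qed
qed

lemma arc_half:
  assumes spS: "spanning_tree V E ends S" and spT: "spanning_tree V E ends T"
  and dj: "S \<inter> T = {}" and un: "S \<union> T = E"
  and gr: "\<forall>h\<in>E. ends h \<subseteq> V \<and> card (ends h) = 2"
  and eS: "e \<in> S" and fT: "f \<in> T"
  shows "fcut E ends S e \<inter> fcycle ends T e = {e,f} \<longleftrightarrow> {g\<in>T. sep ends S e g \<and> sep ends T g e} = {f}"
proof -
  have eE: "e \<in> E" "e \<notin> T" using eS dj un by auto
  have fc: "fcycle ends T e = insert e {g\<in>T. sep ends T g e}" by (rule fcycle_char[OF spT gr eE])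
  have ac: "\<not>(\<exists>C\<subseteq>S. is_cycle ends C)" using spS by (auto simp: spanning_tree_def)
  have "card (ends e) = 2" using gr eE by auto
  then obtain u w where ee: "ends e = {u,w}" "u \<noteq> w" by (auto simp: card_2_iff)
  have see: "sep ends S e e" using tree_sep[of S ends e u w] ac eS ee sep_iff[of ends e u w S e] ee by simp
  have eq: "fcut E ends S e \<inter> fcycle ends T e = insert e {g\<in>T. sep ends S e g \<and> sep ends T g e}"
  proof (rule set_eqI)
    fix g
    show "g \<in> fcut E ends S e \<inter> fcycle ends T e \<longleftrightarrow> g \<in> insert e {g\<in>T. sep ends S e g \<and> sep ends T g e}"
    proof (cases "g \<in> E")
      case True
      then show ?thesis using fcut_char[OF spS gr eS True] fc see by auto
    next
      case False
      then show ?thesis using eE un by (auto simp: fcut_def)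
    qed
  qed
  have ef: "e \<noteq> f" using eS fT dj by auto
  define X where "X = {g\<in>T. sep ends S e g \<and> sep ends T g e}"
  have eX: "e \<notin> X" using eE by (auto simp: X_def)
  show ?thesis unfolding eq X_def[symmetric]
  proof
    assume "insert e X = {e,f}"
    then have "X = {e,f} - {e}" using eX by auto
    then show "X = {f}" using ef by auto
  next
    assume "X = {f}" then show "insert e X = {e,f}" by auto
  qed
qed

lemma arc_iff:
  assumes tv: "(S,T) \<in> tau_vertices V E ends" and gr: "\<forall>h\<in>E. ends h \<subseteq> V \<and> card (ends h) = 2"
  shows "tau3_arc V E ends e f S T \<longleftrightarrow>
    (e\<in>S \<and> f\<in>T \<and> {g\<in>T. sep ends S e g \<and> sep ends T g e} = {f}) \<or>
    (e\<in>T \<and> f\<in>S \<and> {g\<in>S. sep ends T e g \<and> sep ends S g e} = {f})"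
proof -
  have t: "spanning_tree V E ends S" "spanning_tree V E ends T" "S \<inter> T = {}" "S \<union> T = E"
    using tv by (auto simp: tau_vertices_def)
  have t2: "T \<inter> S = {}" "T \<union> S = E" using t by auto
  show ?thesis unfolding tau3_arc_def
    using tv arc_half[OF t gr, of e f] arc_half[OF t(2,1) t2 gr, of e f] by blast
qed


lemma conn_contract:
  assumes F: "\<forall>h\<in>F. v \<notin> ends h \<and> h \<noteq> eab" and ea: "ends ea = {v,a}" and eb: "ends eb = {v,b}"
  and ne: "v \<noteq> a" "v \<noteq> b" and pq: "p \<noteq> v" "q \<noteq> v"
  shows "conn ends (F \<union> {ea,eb}) p q \<longleftrightarrow> conn (ends(eab := {a,b})) (insert eab F) p q"
proof
  let ?m = "\<lambda>z. if z = v then a else z"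
  assume c: "conn ends (F \<union> {ea,eb}) p q"
  have "conn (ends(eab := {a,b})) (insert eab F) (?m p) (?m q)"
  proof (rule conn_map[OF _ c])
    fix g r s assume g: "g \<in> F \<union> {ea,eb}" "ends g = {r,s}"
    consider "g \<in> F" | "g = ea" | "g = eb" using g by auto
    then show "conn (ends(eab := {a,b})) (insert eab F) (?m r) (?m s)"
    proof cases
      case 1 then have "r \<noteq> v" "s \<noteq> v" "g \<noteq> eab" using F g by auto
      have e': "(ends(eab:={a,b})) g = {r,s}" using g \<open>g \<noteq> eab\<close> by simp
      have "conn (ends(eab := {a,b})) (insert eab F) r s" using 1 e' by (intro conn_edge[of g]) auto
      then show ?thesis using \<open>r \<noteq> v\<close> \<open>s \<noteq> v\<close> by simp
    next
      case 2 then have "{r,s} = {v,a}" using g ea by simp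
      then have "?m r = a" "?m s = a" using ne by (auto simp: doubleton_eq_iff)
      then show ?thesis by simp
    next
      case 3 then have "{r,s} = {v,b}" using g eb by simp
      then have "(?m r = a \<and> ?m s = b) \<or> (?m r = b \<and> ?m s = a)" using ne by (auto simp: doubleton_eq_iff)
      moreover have ab: "conn (ends(eab := {a,b})) (insert eab F) a b" by (rule conn_edge[of eab]) auto
      ultimately show ?thesis by (elim disjE) (simp_all add: ab conn_sym[OF ab])
    qed
  qed
  then show "conn (ends(eab := {a,b})) (insert eab F) p q" using pq by simp
next
  assume c: "conn (ends(eab:={a,b})) (insert eab F) p q"
  have "conn ends (F \<union> {ea,eb}) (id p) (id q)"
  proof (rule conn_map[OF _ c])
    fix g r s assume g: "g \<in> insert eab F" "(ends(eab:={a,b})) g = {r,s}"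
    show "conn ends (F \<union> {ea,eb}) (id r) (id s)"
    proof (cases "g = eab")
      case True
      have va: "conn ends (F \<union> {ea,eb}) v a" by (rule conn_edge[of ea]) (auto simp: ea)
      have vb: "conn ends (F \<union> {ea,eb}) v b" by (rule conn_edge[of eb]) (auto simp: eb)
      have ab: "conn ends (F\<union>{ea,eb}) a b" using conn_trans[OF conn_sym[OF va] vb] .
      have "{r,s} = {a,b}" using g True by simp
      then have "(r=a\<and>s=b) \<or> (r=b\<and>s=a)" by (auto simp: doubleton_eq_iff)
      then show ?thesis using ab conn_sym[OF ab] by auto
    next
      case False
      then have "g \<in> F \<union> {ea,eb}" "ends g = {r,s}" using g by auto
      then show ?thesis by (simp add: conn_edge)
    qed
  qed
  then show "conn ends (F \<union> {ea,eb}) p q" by simp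
qed

lemma conn_pendant_map:
  assumes F: "\<forall>h\<in>F. v \<notin> ends h" and ek: "ends ek = {v,k}"
  and c: "conn ends (insert ek F) p q"
  shows "conn ends F (if p = v then k else p) (if q = v then k else q)"
proof (rule conn_map[OF _ c])
  fix g r s assume g: "g \<in> insert ek F" "ends g = {r,s}"
  show "conn ends F (if r = v then k else r) (if s = v then k else s)"
  proof (cases "g = ek")
    case True
    then have "{r,s} = {v,k}" using g ek by simp
    then have "(r = v \<and> s = k) \<or> (r = k \<and> s = v)" by (auto simp: doubleton_eq_iff)
    then show ?thesis by auto
  next
    case False
    then have "g \<in> F" using g by auto
    then have "r \<noteq> v" "s \<noteq> v" using F g by auto
    then show ?thesis using \<open>g \<in> F\<close> g by (auto intro: conn_edge)
  qed
qed

lemma conn_pendant: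
  assumes F: "\<forall>h\<in>F. v \<notin> ends h" and ek: "ends ek = {v,k}" and p: "p \<noteq> v" and q: "q \<noteq> v"
  shows "conn ends (insert ek F) p q \<longleftrightarrow> conn ends F p q"
  using conn_pendant_map[OF F ek, of p q] p q conn_mono[of F "insert ek F" ends p q] by auto

lemma conn_pendant_v:
  assumes F: "\<forall>h\<in>F. v \<notin> ends h" and ek: "ends ek = {v,k}" and q: "q \<noteq> v"
  shows "conn ends (insert ek F) v q \<longleftrightarrow> conn ends F k q"
proof
  assume "conn ends (insert ek F) v q"
  then show "conn ends F k q" using conn_pendant_map[OF F ek, of v q] q by simp
next
  assume "conn ends F k q"
  then have kq: "conn ends (insert ek F) k q" by (rule conn_mono[rotated]) auto
  have vk: "conn ends (insert ek F) v k" by (rule conn_edge[of ek]) (auto simp: ek)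
  show "conn ends (insert ek F) v q" by (rule conn_trans[OF vk kq])
qed

lemma conn_isolated:
  assumes F: "\<forall>h\<in>F. v \<notin> ends h" and c: "conn ends F v q"
  shows "q = v"
  using c unfolding conn_def
proof (induction rule: rtrancl_induct)
  case (step q r)
  then obtain g where "g \<in> F" "ends g = {q,r}" by (auto simp: adj_def)
  then show ?case using F step by auto
qed simp

lemma set_one: "f \<in> A \<Longrightarrow> x \<notin> A \<Longrightarrow> {g\<in>insert x A. Q g} = {f} \<longleftrightarrow> {g\<in>A. Q g} = {f} \<and> \<not> Q x"
proof (cases "Q x")
  case True
  assume "f \<in> A" "x \<notin> A"
  then have "x \<noteq> f" by auto
  then show ?thesis using True by blast
next
  case False
  then have "{g\<in>insert x A. Q g} = {g\<in>A. Q g}" by auto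
  then show ?thesis using False by simp
qed



lemma main_S:
  fixes ends :: "'e \<Rightarrow> 'v set"
  assumes gr: "\<forall>h\<in>E. ends h \<subseteq> V \<and> card (ends h) = 2"
  and aV: "a \<in> V" "b \<in> V" "c \<in> V"
  and dv: "v \<noteq> a" "v \<noteq> b" "v \<noteq> c" "a \<noteq> b" "a \<noteq> c" "b \<noteq> c"
  and ea: "ends ea = {v,a}" and eb: "ends eb = {v,b}" and ec: "ends ec = {v,c}"
  and eE: "ea \<in> E" "eb \<in> E" "ec \<in> E"
  and noV: "\<forall>h\<in>E - {ea,eb,ec}. v \<notin> ends h"
  and new: "eab \<notin> E"
  and tv: "(S,T) \<in> tau_vertices (V - {v}) (insert eab (E - {ea,eb,ec})) (ends(eab := {a,b}))"
  and abS: "eab \<in> S"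
  and eE': "e \<in> E - {ea,eb,ec}" and fE': "f \<in> E - {ea,eb,ec}"
  shows "tau3_arc V E ends e f (S - {eab} \<union> {ea,eb}) (insert ec T) \<longleftrightarrow>
     tau3_arc (V - {v}) (insert eab (E - {ea,eb,ec})) (ends(eab := {a,b})) e f S T \<and>
     e \<notin> fcut (insert eab (E - {ea,eb,ec})) (ends(eab := {a,b})) S eab \<inter> fcycle ends (insert ec T) ea \<inter> fcycle ends (insert ec T) eb"
proof -
  define V' where "V' = V - {v}"
  define E0 where "E0 = E - {ea,eb,ec}"
  define E' where "E' = insert eab E0"
  define ends' where "ends' = ends(eab := {a,b})"
  define A where "A = S - {eab}"
  define S2 where "S2 = A \<union> {ea,eb}"
  define T2 where "T2 = insert ec T"
  have S2eq: "S - {eab} \<union> {ea,eb} = S2" by (simp add: S2_def A_def)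
  have spS: "spanning_tree V' E' ends' S" and spT: "spanning_tree V' E' ends' T"
    and dj: "S \<inter> T = {}" and un: "S \<union> T = E'"
    using tv by (auto simp: tau_vertices_def V'_def E'_def E0_def ends'_def)
  have acS: "\<not> (\<exists>C\<subseteq>S. is_cycle ends' C)" and acT: "\<not> (\<exists>C\<subseteq>T. is_cycle ends' C)"
    and conS: "\<forall>p\<in>V'. \<forall>q\<in>V'. conn ends' S p q" and conT: "\<forall>p\<in>V'. \<forall>q\<in>V'. conn ends' T p q"
    using spS spT by (auto simp: spanning_tree_def)
  have neq: "ea \<noteq> eb" "ea \<noteq> ec" "eb \<noteq> ec" using ea eb ec dv by (auto simp: doubleton_eq_iff)
  have neqab: "ea \<noteq> eab" "eb \<noteq> eab" "ec \<noteq> eab" using eE new by auto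
  have abT: "eab \<notin> T" using abS dj by auto
  have TE0: "T \<subseteq> E0" using un abT spT by (auto simp: E'_def spanning_tree_def)
  have TgE0: "T - {g} \<subseteq> E0" for g using TE0 by auto
  have AE0: "A \<subseteq> E0" using un spS by (auto simp: E'_def A_def spanning_tree_def)
  have SA: "S = insert eab A" using abS by (auto simp: A_def)
  have E0v: "\<forall>h\<in>E0. v \<notin> ends h \<and> h \<noteq> eab" using noV new by (auto simp: E0_def)
  have E0V: "\<forall>h\<in>E0. ends h \<subseteq> V' \<and> card (ends h) = 2" using gr noV by (auto simp: E0_def V'_def)
  have ends'_eq: "ends' h = ends h" if "h \<noteq> eab" for h using that by (simp add: ends'_def)
  have connU: "conn ends' F = conn ends F" if "F \<subseteq> E0" for F
    unfolding ends'_def by (rule conn_upd) (use that E0v in auto)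
  have gr': "\<forall>h\<in>E'. ends' h \<subseteq> V' \<and> card (ends' h) = 2"
    using E0V aV dv by (auto simp: E'_def ends'_def V'_def)
  have gr2: "\<forall>h\<in>E'. card (ends' h) = 2" using gr' by auto
  have eE0: "e \<in> E0" "f \<in> E0" using eE' fE' by (auto simp: E0_def)
  have eab_e: "e \<noteq> eab" "f \<noteq> eab" using eE0 E0v by auto
  have K1: "conn ends (F \<union> {ea,eb}) p q \<longleftrightarrow> conn ends' (insert eab F) p q"
    if "F \<subseteq> E0" "p \<noteq> v" "q \<noteq> v" for F p q
    unfolding ends'_def by (rule conn_contract) (use that E0v ea eb dv in auto)
  have K2: "conn ends (insert ek F) p q \<longleftrightarrow> conn ends F p q"
    if "F \<subseteq> E0" "ends ek = {v,k}" "p \<noteq> v" "q \<noteq> v" for F p q ek k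
    by (rule conn_pendant) (use that E0v in auto)
  have K3: "conn ends (insert ek F) v q \<longleftrightarrow> conn ends F k q"
    if "F \<subseteq> E0" "ends ek = {v,k}" "q \<noteq> v" for F q ek k
    by (rule conn_pendant_v) (use that E0v in auto)
  have K0: "q = v" if "F \<subseteq> E0" "conn ends F v q" for F q
    by (rule conn_isolated[of F]) (use that E0v in auto)
  have endsE0: "\<exists>p q. ends h = {p,q} \<and> p \<noteq> q \<and> p \<noteq> v \<and> q \<noteq> v \<and> p \<in> V' \<and> q \<in> V'" if "h \<in> E0" for h
  proof -
    have "card (ends h) = 2" using E0V that by auto
    then obtain p q where "ends h = {p,q}" "p \<noteq> q" by (auto simp: card_2_iff)
    moreover have "ends h \<subseteq> V'" using E0V that by auto
    ultimately show ?thesis by (intro exI[of _ p] exI[of _ q]) (auto simp: V'_def)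
  qed
  have S2E: "S2 \<subseteq> E" using AE0 eE by (auto simp: S2_def E0_def)
  have T2E: "T2 \<subseteq> E" using TE0 eE by (auto simp: T2_def E0_def)
  have spS2: "spanning_tree V E ends S2"
    unfolding spanning_tree_def
  proof (intro conjI)
    show "S2 \<subseteq> E" by (rule S2E)
    have ca: "conn ends S2 a p" if "p \<in> V" for p
    proof (cases "p = v")
      case True
      have "conn ends S2 p a" by (rule conn_edge[of ea]) (auto simp: S2_def ea True)
      then show ?thesis by (rule conn_sym)
    next
      case False
      then have "conn ends' S a p" using conS aV that dv by (auto simp: V'_def)
      then show ?thesis using K1[OF AE0, of a p] False dv SA by (simp add: S2_def)
    qed
    show "\<forall>p\<in>V. \<forall>q\<in>V. conn ends S2 p q"
      using ca conn_sym conn_trans by metis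
    show "\<not> (\<exists>C\<subseteq>S2. is_cycle ends C)"
    proof (rule acyclicI)
      show "\<forall>h\<in>S2. card (ends h) = 2" using S2E gr by auto
    next
      fix g p q assume g: "g \<in> S2" "ends g = {p,q}"
      consider "g = ea" | "g = eb" | "g \<in> A" using g by (auto simp: S2_def)
      then show "\<not> conn ends (S2 - {g}) p q"
      proof cases
        case 1
        have S2g: "S2 - {g} = insert eb A" using 1 neq AE0 by (auto simp: S2_def E0_def)
        have nab: "\<not> conn ends' A a b" using tree_sep[of S ends' eab a b] acS abS dv
          by (simp add: ends'_def A_def)
        have "\<not> conn ends (insert eb A) v a"
          using K3[OF AE0 eb, of a] dv nab connU[OF AE0] conn_sym by metis
        moreover have "(p = v \<and> q = a) \<or> (p = a \<and> q = v)" using g 1 ea by (auto simp: doubleton_eq_iff)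
        ultimately show ?thesis unfolding S2g using conn_sym by metis
      next
        case 2
        have S2g: "S2 - {g} = insert ea A" using 2 neq AE0 by (auto simp: S2_def E0_def)
        have nab: "\<not> conn ends' A a b" using tree_sep[of S ends' eab a b] acS abS dv
          by (simp add: ends'_def A_def)
        have "\<not> conn ends (insert ea A) v b"
          using K3[OF AE0 ea, of b] dv nab connU[OF AE0] by metis
        moreover have "(p = v \<and> q = b) \<or> (p = b \<and> q = v)" using g 2 eb by (auto simp: doubleton_eq_iff)
        ultimately show ?thesis unfolding S2g using conn_sym by metis
      next
        case 3
        have gE0: "g \<in> E0" using 3 AE0 by auto
        have pq: "p \<noteq> q" "p \<noteq> v" "q \<noteq> v" using endsE0[OF gE0] g by (auto simp: doubleton_eq_iff)
        have S2g: "S2 - {g} = (A - {g}) \<union> {ea,eb}" using 3 neq AE0 gE0 by (auto simp: S2_def E0_def)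
        have Sg: "S - {g} = insert eab (A - {g})" using SA gE0 E0v by auto
        have "\<not> conn ends' (S - {g}) p q"
          using tree_sep[of S ends' g p q] acS 3 g pq SA ends'_eq[of g] gE0 E0v by auto
        have Ag: "A - {g} \<subseteq> E0" using AE0 by auto
        then show ?thesis unfolding S2g using K1[OF Ag, of p q] pq Sg \<open>\<not> conn ends' (S - {g}) p q\<close> by auto
      qed
    qed
  qed
  have spT2: "spanning_tree V E ends T2"
    unfolding spanning_tree_def
  proof (intro conjI)
    show "T2 \<subseteq> E" by (rule T2E)
    have cc: "conn ends T2 c p" if "p \<in> V" for p
    proof (cases "p = v")
      case True
      have "conn ends T2 p c" by (rule conn_edge[of ec]) (auto simp: T2_def ec True)
      then show ?thesis by (rule conn_sym)
    next
      case False
      then have "conn ends' T c p" using conT aV that dv by (auto simp: V'_def)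
      then show ?thesis using K2[OF TE0 ec, of c p] False dv connU[OF TE0] by (simp add: T2_def)
    qed
    show "\<forall>p\<in>V. \<forall>q\<in>V. conn ends T2 p q"
      using cc conn_sym conn_trans by metis
    show "\<not> (\<exists>C\<subseteq>T2. is_cycle ends C)"
    proof (rule acyclicI)
      show "\<forall>h\<in>T2. card (ends h) = 2" using T2E gr by auto
    next
      fix g p q assume g: "g \<in> T2" "ends g = {p,q}"
      show "\<not> conn ends (T2 - {g}) p q"
      proof (cases "g = ec")
        case True
        have T2g: "T2 - {g} = T" using True TE0 by (auto simp: T2_def E0_def)
        have "\<not> conn ends T v c" using K0[OF TE0, of c] dv by auto
        moreover have "(p = v \<and> q = c) \<or> (p = c \<and> q = v)" using g True ec by (auto simp: doubleton_eq_iff)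
        ultimately show ?thesis unfolding T2g using conn_sym by metis
      next
        case False
        then have gT: "g \<in> T" using g by (auto simp: T2_def)
        have gE0: "g \<in> E0" using gT TE0 by auto
        have pq: "p \<noteq> q" "p \<noteq> v" "q \<noteq> v" using endsE0[OF gE0] g by (auto simp: doubleton_eq_iff)
        have T2g: "T2 - {g} = insert ec (T - {g})" using False by (auto simp: T2_def)
        have "\<not> conn ends' (T - {g}) p q"
          using tree_sep[of T ends' g p q] acT gT g pq ends'_eq[of g] gE0 E0v by auto
        then have "\<not> conn ends (T - {g}) p q" using connU[OF TgE0] by auto
        then show ?thesis unfolding T2g using K2[OF TgE0 ec, of p q] pq by auto
      qed
    qed
  qed
  have tv2: "(S2, T2) \<in> tau_vertices V E ends"
  proof -
    have "S2 \<inter> T2 = {}" using dj AE0 TE0 neq abT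
      by (auto simp: S2_def T2_def A_def E0_def)
    moreover have "S2 \<union> T2 = E" using un eE abS abT new
      by (auto simp: S2_def T2_def A_def E'_def E0_def)
    ultimately show ?thesis using spS2 spT2 by (simp add: tau_vertices_def)
  qed
  have grG: "\<forall>h\<in>E. ends h \<subseteq> V \<and> card (ends h) = 2" by (rule gr)
  have tv': "(S,T) \<in> tau_vertices V' E' ends'" using tv by (simp add: V'_def E'_def E0_def ends'_def)
  have sepA: "sep ends S2 g h \<longleftrightarrow> sep ends' S g h" if gA: "g \<in> A" and hE: "h \<in> E0" for g h
  proof -
    obtain p q where pq: "ends h = {p,q}" "p \<noteq> v" "q \<noteq> v" using endsE0[OF hE] by blast
    have h': "ends' h = {p,q}" using pq that E0v ends'_eq by auto
    have gE0: "g \<in> E0" using that AE0 by auto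
    have S2g: "S2 - {g} = (A - {g}) \<union> {ea,eb}" using that neq AE0 gE0 by (auto simp: S2_def E0_def)
    have Sg: "S - {g} = insert eab (A - {g})" using SA gE0 E0v by auto
    have Ag: "A - {g} \<subseteq> E0" using AE0 by auto
    show ?thesis using sep_iff[of ends h p q S2 g] sep_iff[of ends' h p q S g] pq h'
      K1[OF Ag, of p q] S2g Sg by auto
  qed
  have sepT: "sep ends T2 g h \<longleftrightarrow> sep ends' T g h" if gT: "g \<in> T" and hE: "h \<in> E0" for g h
  proof -
    obtain p q where pq: "ends h = {p,q}" "p \<noteq> v" "q \<noteq> v" using endsE0[OF hE] by blast
    have h': "ends' h = {p,q}" using pq that E0v ends'_eq by auto
    have gE0: "g \<in> E0" using that TE0 by auto
    have T2g: "T2 - {g} = insert ec (T - {g})" using that gE0 by (auto simp: T2_def E0_def)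
    show ?thesis using sep_iff[of ends h p q T2 g] sep_iff[of ends' h p q T g] pq h'
      K2[OF TgE0 ec, of p q] connU[OF TgE0] T2g by auto
  qed
  have sepec: "\<not> sep ends T2 ec h" if hE: "h \<in> E0" for h
  proof -
    obtain p q where pq: "ends h = {p,q}" "p \<in> V'" "q \<in> V'" using endsE0[OF hE] by blast
    have T2g: "T2 - {ec} = T" using TE0 by (auto simp: T2_def E0_def)
    have "conn ends T p q" using conT pq connU[OF TE0] by auto
    then show ?thesis using sep_iff[of ends h p q T2 ec] pq T2g by auto
  qed
  have sepea: "sep ends S2 ea h \<longleftrightarrow> sep ends' S eab h" if hE: "h \<in> E0" for h
  proof -
    obtain p q where pq: "ends h = {p,q}" "p \<noteq> v" "q \<noteq> v" using endsE0[OF hE] by blast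
    have h': "ends' h = {p,q}" using pq that E0v ends'_eq by auto
    have S2g: "S2 - {ea} = insert eb A" using neq AE0 by (auto simp: S2_def E0_def)
    have Sg: "S - {eab} = A" by (simp add: A_def)
    show ?thesis using sep_iff[of ends h p q S2 ea] sep_iff[of ends' h p q S eab] pq h'
      K2[OF AE0 eb, of p q] connU[OF AE0] S2g Sg by auto
  qed
  have sepeb: "sep ends S2 eb h \<longleftrightarrow> sep ends' S eab h" if hE: "h \<in> E0" for h
  proof -
    obtain p q where pq: "ends h = {p,q}" "p \<noteq> v" "q \<noteq> v" using endsE0[OF hE] by blast
    have h': "ends' h = {p,q}" using pq that E0v ends'_eq by auto
    have S2g: "S2 - {eb} = insert ea A" using neq AE0 by (auto simp: S2_def E0_def)
    have Sg: "S - {eab} = A" by (simp add: A_def)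
    show ?thesis using sep_iff[of ends h p q S2 eb] sep_iff[of ends' h p q S eab] pq h'
      K2[OF AE0 ea, of p q] connU[OF AE0] S2g Sg by auto
  qed
  have sepTk: "sep ends T2 g ek \<longleftrightarrow> \<not> conn ends (T - {g}) c k"
    if "g \<in> T" "ends ek = {v,k}" "k \<noteq> v" for g ek k
  proof -
    have gE0: "g \<in> E0" using that TE0 by auto
    have T2g: "T2 - {g} = insert ec (T - {g})" using that gE0 by (auto simp: T2_def E0_def)
    show ?thesis using sep_iff[of ends ek v k T2 g] that K3[OF TgE0 ec, of k] T2g by auto
  qed
  have sepTab: "sep ends' T g eab \<longleftrightarrow> \<not> conn ends (T - {g}) a b" if "g \<in> T" for g
    using sep_iff[of ends' eab a b T g] connU[OF TgE0] by (auto simp: ends'_def)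
  have fcutS: "e \<in> fcut E' ends' S eab \<longleftrightarrow> sep ends' S eab e"
    by (rule fcut_char[OF spS gr' abS]) (use eE0 in \<open>auto simp: E'_def\<close>)
  have fcyc: "fcycle ends T2 ek = insert ek {g\<in>T2. sep ends T2 g ek}" if "ek \<in> {ea,eb}" for ek
    by (rule fcycle_char[OF spT2 gr]) (use that eE neq TE0 new in \<open>auto simp: T2_def E0_def\<close>)
  have arcG: "tau3_arc V E ends e f S2 T2 \<longleftrightarrow>
    (e\<in>S2 \<and> f\<in>T2 \<and> {g\<in>T2. sep ends S2 e g \<and> sep ends T2 g e} = {f}) \<or>
    (e\<in>T2 \<and> f\<in>S2 \<and> {g\<in>S2. sep ends T2 e g \<and> sep ends S2 g e} = {f})" by (rule arc_iff[OF tv2 gr])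
  have arcG': "tau3_arc V' E' ends' e f S T \<longleftrightarrow>
    (e\<in>S \<and> f\<in>T \<and> {g\<in>T. sep ends' S e g \<and> sep ends' T g e} = {f}) \<or>
    (e\<in>T \<and> f\<in>S \<and> {g\<in>S. sep ends' T e g \<and> sep ends' S g e} = {f})" by (rule arc_iff[OF tv' gr'])
  have memS2: "x \<in> S2 \<longleftrightarrow> x \<in> S" if "x \<in> E0" for x using that E0v by (auto simp: S2_def A_def E0_def)
  have memT2: "x \<in> T2 \<longleftrightarrow> x \<in> T" if "x \<in> E0" for x using that by (auto simp: T2_def E0_def)
  have eST: "e \<in> S \<or> e \<in> T" using un eE0 by (auto simp: E'_def)
  have goal: "tau3_arc V E ends e f S2 T2 \<longleftrightarrow> tau3_arc V' E' ends' e f S T \<and>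
     e \<notin> fcut E' ends' S eab \<inter> fcycle ends T2 ea \<inter> fcycle ends T2 eb"
  proof (cases "e \<in> S")
    case True
    have eT: "e \<notin> T" "e \<notin> T2" using True dj eE0 memT2 by auto
    have eA: "e \<in> A" using True eab_e by (simp add: A_def)
    have "{g\<in>T2. sep ends S2 e g \<and> sep ends T2 g e} = {g\<in>T. sep ends' S e g \<and> sep ends' T g e}"
      using sepec[OF eE0(1)] sepA[OF eA] sepT[OF _ eE0(1)] TE0 by (auto simp: T2_def)
    then have "tau3_arc V E ends e f S2 T2 \<longleftrightarrow> tau3_arc V' E' ends' e f S T"
      using arcG arcG' True eT memS2[OF eE0(1)] memT2[OF eE0(2)] by auto
    moreover have "e \<notin> fcycle ends T2 ea" using fcyc[of ea] eT eE' by auto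
    ultimately show ?thesis by auto
  next
    case False
    then have eT: "e \<in> T" "e \<in> T2" "e \<notin> S2" using eST memS2[OF eE0(1)] by (auto simp: T2_def)
    have fA: "f \<in> S \<longleftrightarrow> f \<in> A" using eab_e by (auto simp: A_def)
    define P where "P g \<longleftrightarrow> sep ends' T e g \<and> sep ends' S g e" for g
    define Z where "Z \<longleftrightarrow> sep ends' S eab e"
    define Na where "Na \<longleftrightarrow> \<not> conn ends (T - {e}) c a"
    define Nb where "Nb \<longleftrightarrow> \<not> conn ends (T - {e}) c b"
    define Nab where "Nab \<longleftrightarrow> \<not> conn ends (T - {e}) a b"
    define Q where "Q g \<longleftrightarrow> sep ends T2 e g \<and> sep ends S2 g e" for g
    have QP: "Q g \<longleftrightarrow> P g" if "g \<in> A" for g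
      using that sepT[OF eT(1)] sepA[OF that eE0(1)] AE0 by (auto simp: P_def Q_def)
    have Qa: "Q ea \<longleftrightarrow> Z \<and> Na"
      using sepTk[OF eT(1) ea] sepea[OF eE0(1)] dv by (auto simp: Z_def Na_def Q_def)
    have Qb: "Q eb \<longleftrightarrow> Z \<and> Nb"
      using sepTk[OF eT(1) eb] sepeb[OF eE0(1)] dv by (auto simp: Z_def Nb_def Q_def)
    have Pab: "P eab \<longleftrightarrow> Nab \<and> Z" using sepTab[OF eT(1)] by (simp add: P_def Nab_def Z_def)
    have cond: "e \<notin> fcut E' ends' S eab \<inter> fcycle ends T2 ea \<inter> fcycle ends T2 eb \<longleftrightarrow> \<not> (Z \<and> Na \<and> Nb)"
      using fcutS fcyc[of ea] fcyc[of eb] eE' eT sepTk[OF eT(1) ea] sepTk[OF eT(1) eb] dv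
      by (auto simp: Z_def Na_def Nb_def)
    have R1: "\<not> Nab" if "\<not> Na" "\<not> Nb"
      using that conn_trans[OF conn_sym, of ends "T - {e}" c a b] unfolding Na_def Nb_def Nab_def by blast
    have R2: "\<not> Nb" if "\<not> Nab" "\<not> Na"
      using that conn_trans[of ends "T - {e}" c a b] unfolding Na_def Nb_def Nab_def by blast
    have R3: "\<not> Na" if "\<not> Nab" "\<not> Nb"
      using that conn_trans[of ends "T - {e}" c b a] conn_sym[of ends "T - {e}" a b] unfolding Na_def Nb_def Nab_def by blast
    have arcL: "tau3_arc V E ends e f S2 T2 \<longleftrightarrow> f \<in> S2 \<and> {g\<in>S2. Q g} = {f}"
      using arcG eT by (auto simp: Q_def)
    have arcR: "tau3_arc V' E' ends' e f S T \<longleftrightarrow> f \<in> S \<and> {g\<in>S. P g} = {f}"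
      using arcG' eT False by (auto simp: P_def)
    show ?thesis
    proof (cases "f \<in> A")
      case False
      then have "f \<notin> S2" "f \<notin> S" using memS2[OF eE0(2)] fA by auto
      then show ?thesis using arcL arcR by simp
    next
      case True
      have fS: "f \<in> S2" "f \<in> S" using True memS2[OF eE0(2)] fA by auto
      have nA: "ea \<notin> insert eb A" "eb \<notin> A" "eab \<notin> A" using AE0 neq by (auto simp: A_def E0_def)
      have "{g\<in>S2. Q g} = {f} \<longleftrightarrow> {g\<in>A. Q g} = {f} \<and> \<not> Q eb \<and> \<not> Q ea"
        using set_one[of f "insert eb A" ea Q] set_one[of f A eb Q] True nA
        by (simp add: S2_def insert_commute)
      moreover have "{g\<in>A. Q g} = {g\<in>A. P g}" using QP by auto
      moreover have "{g\<in>S. P g} = {f} \<longleftrightarrow> {g\<in>A. P g} = {f} \<and> \<not> P eab"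
        using set_one[of f A eab P] True nA SA by simp
      ultimately have L: "tau3_arc V E ends e f S2 T2 \<longleftrightarrow> {g\<in>A. P g} = {f} \<and> \<not> (Z \<and> Na) \<and> \<not> (Z \<and> Nb)"
        and R: "tau3_arc V' E' ends' e f S T \<longleftrightarrow> {g\<in>A. P g} = {f} \<and> \<not> (Nab \<and> Z)"
        using arcL arcR fS Qa Qb Pab by auto
      show ?thesis unfolding L R cond using R1 R2 R3 by blast
    qed
  qed
  from goal show ?thesis by (simp only: S2_def A_def T2_def V'_def E'_def E0_def ends'_def)
qed



lemma tau3_arc_sym: "tau3_arc V E ends e f S T = tau3_arc V E ends e f T S"
  by (auto simp: tau3_arc_def tau_vertices_def)

lemma conn_empty: "conn ends {} p q \<Longrightarrow> p = q"
  by (simp add: conn_def adj_def)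

lemma par_not_atomic:
  assumes atom: "atomic V E ends" and g: "g1 \<in> E" "g2 \<in> E" "g3 \<in> E"
  and d: "g1 \<noteq> g2" "g3 \<noteq> g1" "g3 \<noteq> g2"
  and e1: "ends g1 = {v,x}" "ends g2 = {v,x}" and vx: "v \<noteq> x" and sub: "{v,x} \<subseteq> V"
  shows False
proof -
  have st: "spanning_tree {v,x} {g1,g2} ends {g}" if "g \<in> {g1,g2}" for g
    unfolding spanning_tree_def
  proof (intro conjI)
    show "{g} \<subseteq> {g1,g2}" using that by auto
    have eg: "ends g = {v,x}" using that e1 by auto
    have vx': "conn ends {g} v x" by (rule conn_edge[of g]) (auto simp: eg)
    show "\<forall>p\<in>{v,x}. \<forall>q\<in>{v,x}. conn ends {g} p q" using vx' conn_sym[OF vx'] by auto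
    show "\<not> (\<exists>C\<subseteq>{g}. is_cycle ends C)"
    proof (rule acyclicI)
      show "\<forall>h\<in>{g}. card (ends h) = 2" using eg vx by auto
    next
      fix h p q assume h: "h \<in> {g}" "ends h = {p,q}"
      then have "p \<noteq> q" using eg vx by (auto simp: doubleton_eq_iff)
      moreover have "{g} - {h} = {}" using h by auto
      ultimately show "\<not> conn ends ({g} - {h}) p q" using conn_empty[of ends p q] by auto
    qed
  qed
  have s1: "spanning_tree {v,x} {g1,g2} ends {g1}" by (rule st) simp
  have s2: "spanning_tree {v,x} {g1,g2} ends {g2}" by (rule st) simp
  have bs: "bispanning {v,x} {g1,g2} ends"
    unfolding bispanning_def
    apply (rule exI[of _ "{g1}"], rule exI[of _ "{g2}"])
    using s1 s2 d by auto
  have sg: "subgraph {v,x} {g1,g2} V E ends" using sub g e1 by (auto simp: subgraph_def)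
  have ne: "{v,x} \<noteq> {}" by simp
  have "({v,x} = V \<and> {g1,g2} = E) \<or> (\<exists>w. {v,x} = {w})"
    using atom[unfolded atomic_def, rule_format, of "{v,x}" "{g1,g2}"] ne sg bs by blast
  then show False
  proof
    assume "{v,x} = V \<and> {g1,g2} = E"
    then have "g3 \<in> {g1,g2}" using g by auto
    then show False using d by auto
  next
    assume "\<exists>w. {v,x} = {w}"
    then obtain w where "{v,x} = {w}" by blast
    then have "v = w" "x = w" by auto
    then show False using vx by simp
  qed
qed

theorem mainTheorem14:
  fixes V :: "'v set" and E :: "'e set" and ends :: "'e \<Rightarrow> 'v set"
    and v x y z a b c :: 'v and ex ey ez ea eb ec eab :: 'e
  assumes G: "graph V E ends" and bisp: "bispanning V E ends" and atom: "atomic V E ends"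
    and vV: "v \<in> V"
    and ends_ex: "ends ex = {v, x}" and ends_ey: "ends ey = {v, y}" and ends_ez: "ends ez = {v, z}"
    and exE: "ex \<in> E" and eyE: "ey \<in> E" and ezE: "ez \<in> E"
    and dist: "ex \<noteq> ey" "ex \<noteq> ez" "ey \<noteq> ez"
    and inc: "{g\<in>E. v \<in> ends g} = {ex, ey, ez}"
    and choice: "(a, b, c, ea, eb, ec) \<in> {(x, y, z, ex, ey, ez), (x, z, y, ex, ez, ey), (y, z, x, ey, ez, ex)}"
    and new: "eab \<notin> E"
  defines "V' \<equiv> V - {v}"
    and "E' \<equiv> insert eab (E - {ex, ey, ez})"
    and "ends' \<equiv> ends(eab := {a, b})"
    and "cond1 \<equiv> (\<lambda>e S T. eab \<in> S \<and>
           e \<notin> fcut (insert eab (E - {ex, ey, ez})) (ends(eab := {a, b})) S eab \<inter> fcycle ends (insert ec T) ea \<inter> fcycle ends (insert ec T) eb)"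
    and "cond2 \<equiv> (\<lambda>e S T. eab \<in> T \<and>
           e \<notin> fcut (insert eab (E - {ex, ey, ez})) (ends(eab := {a, b})) T eab \<inter> fcycle ends (insert ec S) ea \<inter> fcycle ends (insert ec S) eb)"
  shows "(\<forall>e f S T. tau3_arc V' E' ends' e f S T \<and> e \<noteq> eab \<and> f \<noteq> eab \<and>
             (cond1 e S T \<or> cond2 e S T) \<longrightarrow>
             (case rho eab ea eb ec (S, T) of (S2, T2) \<Rightarrow> tau3_arc V E ends e f S2 T2))
       \<and> (\<forall>(S, T)\<in>tau_vertices V' E' ends'. \<forall>e\<in>E' - {eab}. \<forall>f\<in>E' - {eab}.
             (\<not> tau3_arc V' E' ends' e f S T \<or>
              (tau3_arc V' E' ends' e f S T \<and> \<not> cond1 e S T \<and> \<not> cond2 e S T)) \<longrightarrow>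
             (case rho eab ea eb ec (S, T) of (S2, T2) \<Rightarrow> \<not> tau3_arc V E ends e f S2 T2))"
proof -
  have gr: "\<forall>h\<in>E. ends h \<subseteq> V \<and> card (ends h) = 2" using G by (auto simp: graph_def)
  have vx: "v \<noteq> x" "v \<noteq> y" "v \<noteq> z" using gr exE eyE ezE ends_ex ends_ey ends_ez by auto
  have xyzV: "x \<in> V" "y \<in> V" "z \<in> V" using gr exE eyE ezE ends_ex ends_ey ends_ez by auto
  have xy: "x \<noteq> y"
  proof
    assume "x = y"
    then show False using par_not_atomic[OF atom exE eyE ezE dist(1) dist(2)[symmetric] dist(3)[symmetric]]
      ends_ex ends_ey vx vV xyzV by auto
  qed
  have xz: "x \<noteq> z"
  proof
    assume "x = z"
    then show False using par_not_atomic[OF atom exE ezE eyE dist(2) dist(1)[symmetric] dist(3)]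
      ends_ex ends_ez vx vV xyzV by auto
  qed
  have yz: "y \<noteq> z"
  proof
    assume "y = z"
    then show False using par_not_atomic[OF atom eyE ezE exE dist(3) dist(1) dist(2)]
      ends_ey ends_ez vx vV xyzV by auto
  qed
  have ch: "(a = x \<and> b = y \<and> c = z \<and> ea = ex \<and> eb = ey \<and> ec = ez) \<or>
            (a = x \<and> b = z \<and> c = y \<and> ea = ex \<and> eb = ez \<and> ec = ey) \<or>
            (a = y \<and> b = z \<and> c = x \<and> ea = ey \<and> eb = ez \<and> ec = ex)" using choice by auto
  have ea: "ends ea = {v,a}" and eb: "ends eb = {v,b}" and ec: "ends ec = {v,c}"
    using ch ends_ex ends_ey ends_ez by auto
  have eE: "ea \<in> E" "eb \<in> E" "ec \<in> E" using ch exE eyE ezE by auto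
  have abcV: "a \<in> V" "b \<in> V" "c \<in> V" using ch xyzV by auto
  have dv: "v \<noteq> a" "v \<noteq> b" "v \<noteq> c" "a \<noteq> b" "a \<noteq> c" "b \<noteq> c" using ch vx xy xz yz by auto
  have Eeq: "{ex,ey,ez} = {ea,eb,ec}" using ch by auto
  have noV: "\<forall>h\<in>E - {ea,eb,ec}. v \<notin> ends h" using inc Eeq by blast
  have E'eq: "E' = insert eab (E - {ea,eb,ec})" by (simp add: E'_def Eeq)
  have c1: "cond1 e S T \<longleftrightarrow> eab \<in> S \<and> e \<notin> fcut (insert eab (E - {ea,eb,ec})) (ends(eab := {a,b})) S eab \<inter>
     fcycle ends (insert ec T) ea \<inter> fcycle ends (insert ec T) eb" for e S T
    by (simp add: cond1_def Eeq)
  have c2: "cond2 e S T \<longleftrightarrow> eab \<in> T \<and> e \<notin> fcut (insert eab (E - {ea,eb,ec})) (ends(eab := {a,b})) T eab \<inter>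
     fcycle ends (insert ec S) ea \<inter> fcycle ends (insert ec S) eb" for e S T
    by (simp add: cond2_def Eeq)
  have key: "(case rho eab ea eb ec (S, T) of (S2, T2) \<Rightarrow> tau3_arc V E ends e f S2 T2) \<longleftrightarrow>
      tau3_arc V' E' ends' e f S T \<and> (cond1 e S T \<or> cond2 e S T)"
    if tv: "(S,T) \<in> tau_vertices V' E' ends'" and eE': "e \<in> E' - {eab}" and fE': "f \<in> E' - {eab}" for e f S T
  proof -
    have tv0: "(S,T) \<in> tau_vertices (V - {v}) (insert eab (E - {ea,eb,ec})) (ends(eab := {a,b}))"
      using tv by (simp add: V'_def E'eq ends'_def)
    have tv1: "(T,S) \<in> tau_vertices (V - {v}) (insert eab (E - {ea,eb,ec})) (ends(eab := {a,b}))"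
      using tv0 by (auto simp: tau_vertices_def)
    have dj: "S \<inter> T = {}" and un: "S \<union> T = E'" using tv by (auto simp: tau_vertices_def)
    have ef: "e \<in> E - {ea,eb,ec}" "f \<in> E - {ea,eb,ec}" using eE' fE' by (auto simp: E'eq)
    show ?thesis
    proof (cases "eab \<in> S")
      case True
      then have nT: "eab \<notin> T" using dj by auto
      have "rho eab ea eb ec (S, T) = (S - {eab} \<union> {ea,eb}, insert ec T)" using True by (simp add: rho_def)
      then show ?thesis
        using main_S[OF gr abcV dv ea eb ec eE noV new tv0 True ef] True nT c1 c2
        by (simp add: V'_def E'eq ends'_def)
    next
      case False
      then have nT: "eab \<in> T" using un by (auto simp: E'_def)
      have "rho eab ea eb ec (S, T) = (insert ec S, T - {eab} \<union> {ea,eb})" using False by (simp add: rho_def)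
      then show ?thesis
        using main_S[OF gr abcV dv ea eb ec eE noV new tv1 nT ef] False nT c1 c2
          tau3_arc_sym[of V E ends e f] tau3_arc_sym[of V' E' ends' e f]
        by (simp add: V'_def E'eq ends'_def)
    qed
  qed
  show ?thesis
  proof (intro conjI allI impI ballI)
    fix e f S T
    assume h: "tau3_arc V' E' ends' e f S T \<and> e \<noteq> eab \<and> f \<noteq> eab \<and> (cond1 e S T \<or> cond2 e S T)"
    then have tv: "(S,T) \<in> tau_vertices V' E' ends'" and ee: "e \<in> E' - {eab}" "f \<in> E' - {eab}"
      by (auto simp: tau3_arc_def tau_vertices_def)
    then show "case rho eab ea eb ec (S, T) of (S2, T2) \<Rightarrow> tau3_arc V E ends e f S2 T2"
      using key[OF tv ee] h by simp
  next
    fix P assume P: "P \<in> tau_vertices V' E' ends'"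
    obtain S T where PST: "P = (S,T)" by (cases P)
    have tv: "(S,T) \<in> tau_vertices V' E' ends'" using P PST by simp
    show "case P of (S, T) \<Rightarrow> \<forall>e\<in>E' - {eab}. \<forall>f\<in>E' - {eab}. (\<not> tau3_arc V' E' ends' e f S T \<or>
              (tau3_arc V' E' ends' e f S T \<and> \<not> cond1 e S T \<and> \<not> cond2 e S T)) \<longrightarrow>
             (case rho eab ea eb ec (S, T) of (S2, T2) \<Rightarrow> \<not> tau3_arc V E ends e f S2 T2)"
      unfolding PST using key[OF tv] by auto
  qed
qed


end
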